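(* Let $\mathbb{F}$ be an infinite field. Let $I,J,K,I',J',K'$ be finite sets, $\Lambda\subseteq I\times J\times K$, and let $f:I\to I'$, $g:J\to J'$, $h:K\to K'$ be functions. Then $R_s(\langle\Lambda\rangle)\ge R_s(\langle(f\times g\times h)(\Lambda)\rangle)$.
   Context: For finite sets $I,J,K$ and $\Lambda\subseteq I\times J\times K$, $\langle\Lambda\rangle=\{((i,j),(j,k),(k,i))\in(I\times J)\times(J\times K)\times(K\times I): (i,j,k)\in\Lambda\}$. A tensor over $\mathbb{F}$ is a trilinear form $T=\sum t_{a,b,c}x_ay_bz_c$ with variables indexed by finite sets $A,B,C$; its support is $\{(a,b,c):t_{a,b,c}\neq0\}$; its rank $R(T)$ is the minimal number of products of three linear forms (one in each set of variables) summing to $T$. For $\Phi\subseteq A\times B\times C$, the support rank is $R_s(\Phi)=\min\{R(T):\operatorname{supp}(T)=\Phi\}$. *)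

theory Defs
  imports Main
begin

definition tsupp :: "('a \<Rightarrow> 'b \<Rightarrow> 'c \<Rightarrow> 'f::zero) \<Rightarrow> ('a \<times> 'b \<times> 'c) set" where
  "tsupp t = {(a, b, c). t a b c \<noteq> 0}"

definition tensor_rank :: "('a \<Rightarrow> 'b \<Rightarrow> 'c \<Rightarrow> 'f::field) \<Rightarrow> nat" where
  "tensor_rank t = (LEAST r. \<exists>u v w. \<forall>a b c.
      t a b c = (\<Sum>l<r. u l a * v l b * w l c))"

definition support_rank :: "'f::field itself \<Rightarrow> ('a \<times> 'b \<times> 'c) set \<Rightarrow> nat" where
  "support_rank _ \<Phi> = (LEAST r. \<exists>t :: 'a \<Rightarrow> 'b \<Rightarrow> 'c \<Rightarrow> 'f. tsupp t = \<Phi> \<and> tensor_rank t = r)"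

definition bracket :: "('i \<times> 'j \<times> 'k) set \<Rightarrow> (('i \<times> 'j) \<times> ('j \<times> 'k) \<times> ('k \<times> 'i)) set" where
  "bracket \<Lambda> = {((i, j), (j, k), (k, i)) | i j k. (i, j, k) \<in> \<Lambda>}"

end

theory Submission
  imports Defs "HOL-Computational_Algebra.Polynomial"
begin

lemma finite_supp_decomp:
  fixes t :: "'a \<Rightarrow> 'b \<Rightarrow> 'c \<Rightarrow> 'f::field"
  assumes "finite (tsupp t)"
  shows "\<exists>(r::nat) u v w. \<forall>a b c. t a b c = (\<Sum>l<r. u l a * v l b * w l c)"
proof -
  obtain e where e: "bij_betw e {0..<card (tsupp t)} (tsupp t)"
    using ex_bij_betw_nat_finite[OF assms] by blast
  define u where "u l a = (if a = fst (e l) then t a (fst (snd (e l))) (snd (snd (e l))) else 0)" for l a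
  define v where "v l b = (if b = fst (snd (e l)) then 1 else (0::'f))" for l b
  define w where "w l c = (if c = snd (snd (e l)) then 1 else (0::'f))" for l c
  have "t a b c = (\<Sum>l<card (tsupp t). u l a * v l b * w l c)" for a b c
  proof -
    have p: "u l a * v l b * w l c = (\<lambda>s. if s = (a,b,c) then t a b c else 0) (e l)" for l
      unfolding u_def v_def w_def by (cases "e l") auto
    have "(\<Sum>l<card (tsupp t). u l a * v l b * w l c)
        = (\<Sum>l\<in>{0..<card (tsupp t)}. (\<lambda>s. if s = (a,b,c) then t a b c else 0) (e l))"
      by (simp add: p atLeast0LessThan)
    also have "\<dots> = (\<Sum>s\<in>tsupp t. if s = (a,b,c) then t a b c else 0)"
      by (rule sum.reindex_bij_betw[OF e])
    also have "\<dots> = t a b c"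
      using assms by (auto simp: tsupp_def)
    finally show ?thesis by simp
  qed
  then have "\<forall>a b c. t a b c = (\<Sum>l<card (tsupp t). u l a * v l b * w l c)" by blast
  then show ?thesis by blast
qed

lemma rank_decomp:
  fixes t :: "'a \<Rightarrow> 'b \<Rightarrow> 'c \<Rightarrow> 'f::field"
  assumes "finite (tsupp t)"
  shows "\<exists>u v w. \<forall>a b c. t a b c = (\<Sum>l<tensor_rank t. u l a * v l b * w l c)"
  using LeastI_ex[OF finite_supp_decomp[OF assms]] unfolding tensor_rank_def by blast

lemma rank_le:
  fixes t :: "'a \<Rightarrow> 'b \<Rightarrow> 'c \<Rightarrow> 'f::field"
  assumes "\<forall>a b c. t a b c = (\<Sum>l<r. u l a * v l b * w l c)"
  shows "tensor_rank t \<le> r"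
  unfolding tensor_rank_def using assms by (intro Least_le) blast

lemma srank_attained:
  fixes \<Phi> :: "('a \<times> 'b \<times> 'c) set"
  shows "\<exists>t :: 'a \<Rightarrow> 'b \<Rightarrow> 'c \<Rightarrow> 'f::field. tsupp t = \<Phi> \<and> tensor_rank t = support_rank TYPE('f) \<Phi>"
proof -
  define t0 where "t0 = (\<lambda>a b c. if (a,b,c) \<in> \<Phi> then 1 else (0::'f))"
  have "tsupp t0 = \<Phi>" unfolding t0_def tsupp_def by auto
  then have "\<exists>r. \<exists>t :: 'a \<Rightarrow> 'b \<Rightarrow> 'c \<Rightarrow> 'f. tsupp t = \<Phi> \<and> tensor_rank t = r" by blast
  from LeastI_ex[OF this] show ?thesis unfolding support_rank_def by blast
qed

lemma srank_le:
  fixes t :: "'a \<Rightarrow> 'b \<Rightarrow> 'c \<Rightarrow> 'f::field"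
  assumes "tsupp t = \<Phi>"
  shows "support_rank TYPE('f) \<Phi> \<le> tensor_rank t"
  unfolding support_rank_def using assms by (intro Least_le) blast

lemma poly_nonzero:
  fixes c :: "'s \<Rightarrow> 'f::field"
  assumes "finite S" "s0 \<in> S" "inj_on E S" "\<forall>s\<in>S. c s \<noteq> 0"
  shows "(\<Sum>s\<in>S. monom (c s) (E s)) \<noteq> 0"
proof -
  have "coeff (\<Sum>s\<in>S. monom (c s) (E s)) (E s0) = (\<Sum>s\<in>S. if E s = E s0 then c s else 0)"
    by (simp add: coeff_sum)
  also have "\<dots> = (\<Sum>s\<in>S. if s = s0 then c s else 0)"
    using assms(2,3) by (intro sum.cong) (auto dest: inj_onD)
  also have "\<dots> = c s0" using assms by simp
  finally show ?thesis using assms by auto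
qed

lemma sum_swap4:
  "(\<Sum>x\<in>X. \<Sum>y\<in>Y. \<Sum>z\<in>Z. \<Sum>l\<in>L. f l x y z) = (\<Sum>l\<in>L. \<Sum>x\<in>X. \<Sum>y\<in>Y. \<Sum>z\<in>Z. f l x y z)"
proof -
  have "(\<Sum>x\<in>X. \<Sum>y\<in>Y. \<Sum>z\<in>Z. \<Sum>l\<in>L. f l x y z) = (\<Sum>x\<in>X. \<Sum>y\<in>Y. \<Sum>l\<in>L. \<Sum>z\<in>Z. f l x y z)"
    by (intro sum.cong refl) (rule sum.swap)
  also have "\<dots> = (\<Sum>x\<in>X. \<Sum>l\<in>L. \<Sum>y\<in>Y. \<Sum>z\<in>Z. f l x y z)"
    by (intro sum.cong refl) (rule sum.swap)
  also have "\<dots> = (\<Sum>l\<in>L. \<Sum>x\<in>X. \<Sum>y\<in>Y. \<Sum>z\<in>Z. f l x y z)"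
    by (rule sum.swap)
  finally show ?thesis .
qed

lemma sum_prod3:
  fixes A :: "'x \<Rightarrow> 'f::comm_semiring_0"
  shows "(\<Sum>a\<in>X. A a) * (\<Sum>b\<in>Y. B b) * (\<Sum>c\<in>Z. C c) = (\<Sum>a\<in>X. \<Sum>b\<in>Y. \<Sum>c\<in>Z. A a * B b * C c)"
proof -
  have "(\<Sum>a\<in>X. A a) * (\<Sum>b\<in>Y. B b) * (\<Sum>c\<in>Z. C c) = (\<Sum>a\<in>X. A a * ((\<Sum>b\<in>Y. B b) * (\<Sum>c\<in>Z. C c)))"
    by (simp add: sum_distrib_right mult.assoc)
  also have "\<dots> = (\<Sum>a\<in>X. \<Sum>b\<in>Y. \<Sum>c\<in>Z. A a * (B b * C c))"
    unfolding sum_product by (simp only: sum_distrib_left)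
  finally show ?thesis by (simp add: mult.assoc)
qed

lemma enc_inj:
  fixes N a b c a' b' c' :: nat
  assumes "a < N" "b < N" "a' < N" "b' < N"
    and "a + N * b + N * N * c = a' + N * b' + N * N * c'"
  shows "a = a' \<and> b = b' \<and> c = c'"
proof -
  have e: "a + N * (b + N * c) = a' + N * (b' + N * c')"
    using assms(5) by (simp add: algebra_simps)
  have "(a + N * (b + N * c)) mod N = a" "(a + N * (b + N * c)) div N = b + N * c"
    using assms(1) by auto
  moreover have "(a' + N * (b' + N * c')) mod N = a'" "(a' + N * (b' + N * c')) div N = b' + N * c'"
    using assms(3) by auto
  ultimately have 1: "a = a'" and 2: "b + N * c = b' + N * c'" using e by metis+
  have "(b + N * c) mod N = b" "(b + N * c) div N = c"
       "(b' + N * c') mod N = b'" "(b' + N * c') div N = c'"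
    using assms(2,4) by auto
  then show ?thesis using 1 2 by metis
qed

theorem corollary4p3:
  fixes \<Lambda> :: "('i \<times> 'j \<times> 'k) set"
    and I :: "'i set" and J :: "'j set" and K :: "'k set"
    and I' :: "'i2 set" and J' :: "'j2 set" and K' :: "'k2 set"
    and f :: "'i \<Rightarrow> 'i2" and g :: "'j \<Rightarrow> 'j2" and h :: "'k \<Rightarrow> 'k2"
  assumes "infinite (UNIV :: 'f::field set)"
    and "finite I" "finite J" "finite K" "finite I'" "finite J'" "finite K'"
    and "\<Lambda> \<subseteq> I \<times> J \<times> K"
    and "f ` I \<subseteq> I'" "g ` J \<subseteq> J'" "h ` K \<subseteq> K'"
  shows "support_rank TYPE('f) (bracket \<Lambda>)
           \<ge> support_rank TYPE('f) (bracket ((\<lambda>(i, j, k). (f i, g j, h k)) ` \<Lambda>))"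
proof -
  define F where "F = (\<lambda>(i, j, k). (f i, g j, h k))"
  define \<Lambda>' where "\<Lambda>' = F ` \<Lambda>"
  define emb :: "'i \<times> 'j \<times> 'k \<Rightarrow> ('i \<times> 'j) \<times> ('j \<times> 'k) \<times> ('k \<times> 'i)"
    where "emb = (\<lambda>(i, j, k). ((i, j), (j, k), (k, i)))"
  have finL: "finite \<Lambda>" using assms(2-4,8) finite_subset by blast
  have finL': "finite \<Lambda>'" unfolding \<Lambda>'_def using finL by simp
  have br: "bracket \<Lambda> = emb ` \<Lambda>" unfolding bracket_def emb_def by force
  have injemb: "inj_on emb \<Lambda>" unfolding emb_def inj_on_def by auto
  obtain T :: "('i \<times> 'j) \<Rightarrow> ('j \<times> 'k) \<Rightarrow> ('k \<times> 'i) \<Rightarrow> 'f" where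
    Ts: "tsupp T = bracket \<Lambda>" and Tr: "tensor_rank T = support_rank TYPE('f) (bracket \<Lambda>)"
    using srank_attained by blast
  have finT: "finite (tsupp T)" using Ts br finL by simp
  obtain u v w where uvw: "\<forall>x y z. T x y z = (\<Sum>l<tensor_rank T. u l x * v l y * w l z)"
    using rank_decomp[OF finT] by blast
  have Tnz: "T x y z \<noteq> 0 \<longleftrightarrow> (x, y, z) \<in> emb ` \<Lambda>" for x y z
  proof -
    have "(x, y, z) \<in> tsupp T \<longleftrightarrow> (x, y, z) \<in> emb ` \<Lambda>" using Ts br by simp
    then show ?thesis unfolding tsupp_def by simp
  qed
  obtain \<iota> n1 where \<iota>: "\<iota> ` I = {i::nat. i < n1}" "inj_on \<iota> I" using finite_imp_inj_to_nat_seg[OF assms(2)] by blast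
  obtain \<kappa> n2 where \<kappa>: "\<kappa> ` J = {i::nat. i < n2}" "inj_on \<kappa> J" using finite_imp_inj_to_nat_seg[OF assms(3)] by blast
  obtain \<mu> n3 where \<mu>: "\<mu> ` K = {i::nat. i < n3}" "inj_on \<mu> K" using finite_imp_inj_to_nat_seg[OF assms(4)] by blast
  define N where "N = n1 + n2 + 1"
  define E where "E = (\<lambda>(i, j, k). \<iota> i + N * \<kappa> j + N * N * \<mu> k)"
  have injE: "inj_on E \<Lambda>"
  proof (rule inj_onI)
    fix s t assume s: "s \<in> \<Lambda>" and t: "t \<in> \<Lambda>" and eq: "E s = E t"
    obtain i j k where sd: "s = (i, j, k)" by (cases s) auto
    obtain i' j' k' where td: "t = (i', j', k')" by (cases t) auto
    have mem: "i \<in> I" "j \<in> J" "k \<in> K" "i' \<in> I" "j' \<in> J" "k' \<in> K"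
      using s t sd td assms(8) by auto
    have lt: "\<iota> i < N" "\<kappa> j < N" "\<iota> i' < N" "\<kappa> j' < N"
    proof -
      have "\<iota> x < n1" if "x \<in> I" for x using \<iota>(1) that by blast
      moreover have "\<kappa> x < n2" if "x \<in> J" for x using \<kappa>(1) that by blast
      ultimately show "\<iota> i < N" "\<kappa> j < N" "\<iota> i' < N" "\<kappa> j' < N"
        using mem unfolding N_def by fastforce+
    qed
    have "\<iota> i = \<iota> i' \<and> \<kappa> j = \<kappa> j' \<and> \<mu> k = \<mu> k'"
      using enc_inj[OF lt] eq sd td unfolding E_def by simp
    then show "s = t" using mem sd td \<iota>(2) \<kappa>(2) \<mu>(2) by (auto dest: inj_onD)
  qed
  define TT where "TT = (\<lambda>(x, y, z). T x y z)"
  define S where "S = (\<lambda>t'. {t \<in> \<Lambda>. F t = t'})"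
  define P where "P = (\<lambda>t'. \<Sum>t\<in>S t'. monom (TT (emb t)) (E t))"
  have Pnz: "P t' \<noteq> 0" if tL: "t' \<in> \<Lambda>'" for t'
  proof -
    obtain t0 where "t0 \<in> \<Lambda>" "F t0 = t'" using tL unfolding \<Lambda>'_def by blast
    then have "t0 \<in> S t'" unfolding S_def by blast
    moreover have "finite (S t')" unfolding S_def using finL by simp
    moreover have "inj_on E (S t')" using injE unfolding S_def by (rule inj_on_subset) blast
    moreover have "\<forall>s\<in>S t'. TT (emb s) \<noteq> 0" unfolding S_def TT_def using Tnz
      by (metis (mono_tags, lifting) case_prod_conv image_eqI mem_Collect_eq prod.collapse)
    ultimately show ?thesis unfolding P_def by (intro poly_nonzero[where c="\<lambda>t. TT (emb t)"]) auto
  qed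
  have "finite (\<Union>t'\<in>\<Lambda>'. {x. poly (P t') x = 0})"
    using finL' Pnz poly_roots_finite by blast
  then obtain lam :: 'f where lam: "\<forall>t'\<in>\<Lambda>'. poly (P t') lam \<noteq> 0"
    using assms(1) by (metis (mono_tags, lifting) UN_iff ex_new_if_finite mem_Collect_eq)
  define \<alpha> where "\<alpha> = (\<lambda>(i::'i, j::'j). lam ^ (\<iota> i + N * \<kappa> j))"
  define \<beta> where "\<beta> = (\<lambda>(j::'j, k::'k). lam ^ (N * N * \<mu> k))"
  define F1 where "F1 = (\<lambda>(i, j). (f i, g j))"
  define F2 where "F2 = (\<lambda>(j, k). (g j, h k))"
  define F3 where "F3 = (\<lambda>(k, i). (h k, f i))"
  define X where "X = I \<times> J"
  define Y where "Y = J \<times> K"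
  define Z where "Z = K \<times> I"
  have finXYZ: "finite X" "finite Y" "finite Z" unfolding X_def Y_def Z_def using assms(2-4) by auto
  define T' :: "('i2 \<times> 'j2) \<Rightarrow> ('j2 \<times> 'k2) \<Rightarrow> ('k2 \<times> 'i2) \<Rightarrow> 'f" where
    "T' = (\<lambda>p q s. \<Sum>x\<in>X. \<Sum>y\<in>Y. \<Sum>z\<in>Z.
         if F1 x = p \<and> F2 y = q \<and> F3 z = s then \<alpha> x * \<beta> y * T x y z else 0)"
  define r where "r = tensor_rank T"
  define u' where "u' = (\<lambda>l p. \<Sum>x\<in>X. if F1 x = p then \<alpha> x * u l x else 0)"
  define v' where "v' = (\<lambda>l q. \<Sum>y\<in>Y. if F2 y = q then \<beta> y * v l y else 0)"
  define w' where "w' = (\<lambda>l s. \<Sum>z\<in>Z. if F3 z = s then w l z else 0)"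
  have rank': "\<forall>p q s. T' p q s = (\<Sum>l<r. u' l p * v' l q * w' l s)"
  proof (intro allI)
    fix p q s
    have "T' p q s = (\<Sum>x\<in>X. \<Sum>y\<in>Y. \<Sum>z\<in>Z. \<Sum>l<r.
         (if F1 x = p then \<alpha> x * u l x else 0) * (if F2 y = q then \<beta> y * v l y else 0)
          * (if F3 z = s then w l z else 0))"
      unfolding T'_def r_def
      by (intro sum.cong refl) (auto simp: uvw sum_distrib_left mult_ac)
    also have "\<dots> = (\<Sum>l<r. \<Sum>x\<in>X. \<Sum>y\<in>Y. \<Sum>z\<in>Z.
         (if F1 x = p then \<alpha> x * u l x else 0) * (if F2 y = q then \<beta> y * v l y else 0)
          * (if F3 z = s then w l z else 0))"
      by (rule sum_swap4)
    also have "\<dots> = (\<Sum>l<r. u' l p * v' l q * w' l s)"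
      unfolding u'_def v'_def w'_def by (simp only: sum_prod3)
    finally show "T' p q s = (\<Sum>l<r. u' l p * v' l q * w' l s)" .
  qed
  define emb2 :: "'i2 \<times> 'j2 \<times> 'k2 \<Rightarrow> ('i2 \<times> 'j2) \<times> ('j2 \<times> 'k2) \<times> ('k2 \<times> 'i2)"
    where "emb2 = (\<lambda>(i, j, k). ((i, j), (j, k), (k, i)))"
  have T'eq: "T' p q s = (\<Sum>t\<in>\<Lambda>. if emb2 (F t) = (p, q, s) then lam ^ E t * TT (emb t) else 0)"
    for p q s
  proof -
    define G where "G = (\<lambda>(x, y, z). if F1 x = p \<and> F2 y = q \<and> F3 z = s then \<alpha> x * \<beta> y * T x y z else 0)"
    have "T' p q s = (\<Sum>x\<in>X. \<Sum>yz\<in>Y \<times> Z. G (x, yz))"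
      unfolding T'_def G_def by (intro sum.cong refl) (simp add: sum.cartesian_product)
    also have "\<dots> = (\<Sum>xyz\<in>X \<times> (Y \<times> Z). G xyz)"
      by (simp only: sum.cartesian_product case_prod_eta)
    also have "\<dots> = (\<Sum>xyz\<in>emb ` \<Lambda>. G xyz)"
    proof (rule sum.mono_neutral_right)
      show "finite (X \<times> Y \<times> Z)" using finXYZ by simp
      show "emb ` \<Lambda> \<subseteq> X \<times> Y \<times> Z" using assms(8) unfolding emb_def X_def Y_def Z_def by auto
      show "\<forall>i\<in>X \<times> Y \<times> Z - emb ` \<Lambda>. G i = 0" using Tnz unfolding G_def by auto
    qed
    also have "\<dots> = (\<Sum>t\<in>\<Lambda>. G (emb t))" by (rule sum.reindex[OF injemb, unfolded comp_def])
    also have "\<dots> = (\<Sum>t\<in>\<Lambda>. if emb2 (F t) = (p, q, s) then lam ^ E t * TT (emb t) else 0)"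
      by (intro sum.cong refl)
        (auto simp: G_def TT_def emb_def emb2_def F_def F1_def F2_def F3_def \<alpha>_def \<beta>_def E_def power_add split: if_splits)
    finally show ?thesis .
  qed
  have brL': "bracket \<Lambda>' = emb2 ` \<Lambda>'" unfolding bracket_def emb2_def by force
  have embinj: "emb2 a = emb2 b \<Longrightarrow> a = b" for a b unfolding emb2_def by (auto split: prod.splits)
  have supp': "tsupp T' = bracket \<Lambda>'"
  proof -
    have "T' p q s \<noteq> 0 \<longleftrightarrow> (p, q, s) \<in> emb2 ` \<Lambda>'" for p q s
    proof (cases "(p, q, s) \<in> emb2 ` \<Lambda>'")
      case True
      then obtain t' where t': "t' \<in> \<Lambda>'" "(p, q, s) = emb2 t'" by blast
      have "T' p q s = (\<Sum>t\<in>\<Lambda>. if F t = t' then lam ^ E t * TT (emb t) else 0)"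
        unfolding T'eq t'(2) using embinj by (intro sum.cong refl) metis
      also have "\<dots> = (\<Sum>t\<in>S t'. lam ^ E t * TT (emb t))"
        unfolding S_def using finL by (simp add: sum.inter_filter)
      also have "\<dots> = poly (P t') lam"
        unfolding P_def by (simp add: poly_sum poly_monom mult_ac)
      finally show ?thesis using lam t' True by auto
    next
      case False
      have "T' p q s = 0" unfolding T'eq
        using False \<Lambda>'_def by (intro sum.neutral) (auto simp: image_iff)
      then show ?thesis using False by simp
    qed
    then show ?thesis unfolding tsupp_def brL' by auto
  qed
  have "support_rank TYPE('f) (bracket \<Lambda>') \<le> tensor_rank T'" by (rule srank_le[OF supp'])
  also have "\<dots> \<le> r" by (rule rank_le[OF rank'])
  finally show ?thesis unfolding r_def Tr \<Lambda>'_def F_def .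
qed

end
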